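(* Let $n_1,\dots,n_t\ge 0$ be integers and let $G=K_{n_1\times 1,\,n_2\times 2,\,\dots,\,n_t\times t}$ be the complete $(n_1+\dots+n_t)$-partite graph having exactly $n_i$ parts of size $i$ for each $1\le i\le t$. Then $\binom{IDI(G)}{i}\ge n_i$ for every $1\le i\le t$.
   Context: For a finite simple connected graph $G=(V,E)$ with diameter $d$, a rank assignment is a function $f:V\to\mathbb{R}$; under $f$, the string of a vertex $v$ is the $d$-vector whose $i$-th coordinate is the sum of $f(w)$ over all vertices $w$ with $d(v,w)=i$. The ID-index $IDI(G)$ is the minimum $k$ such that there exists $f:V\to\mathbb{R}$ with $|f(V)|=k$ under which all vertices have distinct strings. *)

theory Defs
  imports Complex_Main
begin

definition is_walk :: "'a set \<Rightarrow> ('a \<Rightarrow> 'a \<Rightarrow> bool) \<Rightarrow> 'a list \<Rightarrow> bool" where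
  "is_walk V E xs \<longleftrightarrow> xs \<noteq> [] \<and> set xs \<subseteq> V \<and>
     (\<forall>i. Suc i < length xs \<longrightarrow> E (xs ! i) (xs ! Suc i))"

definition graph_connected :: "'a set \<Rightarrow> ('a \<Rightarrow> 'a \<Rightarrow> bool) \<Rightarrow> bool" where
  "graph_connected V E \<longleftrightarrow> V \<noteq> {} \<and>
     (\<forall>v\<in>V. \<forall>w\<in>V. \<exists>xs. is_walk V E xs \<and> hd xs = v \<and> last xs = w)"

definition gdist :: "'a set \<Rightarrow> ('a \<Rightarrow> 'a \<Rightarrow> bool) \<Rightarrow> 'a \<Rightarrow> 'a \<Rightarrow> nat" where
  "gdist V E v w = (LEAST k. \<exists>xs. is_walk V E xs \<and> hd xs = v \<and> last xs = w \<and> length xs = Suc k)"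

definition diameter :: "'a set \<Rightarrow> ('a \<Rightarrow> 'a \<Rightarrow> bool) \<Rightarrow> nat" where
  "diameter V E = Max {gdist V E v w | v w. v \<in> V \<and> w \<in> V}"

definition vstring :: "'a set \<Rightarrow> ('a \<Rightarrow> 'a \<Rightarrow> bool) \<Rightarrow> ('a \<Rightarrow> real) \<Rightarrow> 'a \<Rightarrow> real list" where
  "vstring V E f v = map (\<lambda>i. \<Sum>w\<in>{w\<in>V. gdist V E v w = i}. f w) [1..<Suc (diameter V E)]"

definition IDI :: "'a set \<Rightarrow> ('a \<Rightarrow> 'a \<Rightarrow> bool) \<Rightarrow> nat" where
  "IDI V E = (LEAST k. \<exists>f :: 'a \<Rightarrow> real. card (f ` V) = k \<and> inj_on (vstring V E f) V)"

text \<open>The complete multipartite graph K_{n_1 x 1, ..., n_t x t}: vertex (i,j,k) is the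
k-th vertex (k < i) of the j-th part (j < n i) among the parts of size i (1 \<le> i \<le> t);
two vertices are adjacent iff they lie in different parts.\<close>
definition cmp_verts :: "nat \<Rightarrow> (nat \<Rightarrow> nat) \<Rightarrow> (nat \<times> nat \<times> nat) set" where
  "cmp_verts t n = {(i, j, k). 1 \<le> i \<and> i \<le> t \<and> j < n i \<and> k < i}"

definition cmp_adj :: "nat \<times> nat \<times> nat \<Rightarrow> nat \<times> nat \<times> nat \<Rightarrow> bool" where
  "cmp_adj u v \<longleftrightarrow> (fst u, fst (snd u)) \<noteq> (fst v, fst (snd v))"

end

theory Submission
  imports Defs "HOL-Library.Nat_Bijection"
begin

definition prt :: "nat \<times> nat \<times> nat \<Rightarrow> nat \<times> nat" where
  "prt u = (fst u, fst (snd u))"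

lemma adj_prt: "cmp_adj u v \<longleftrightarrow> prt u \<noteq> prt v"
  by (simp add: cmp_adj_def prt_def)

lemma walk1: "is_walk V E [v] \<longleftrightarrow> v \<in> V"
  by (simp add: is_walk_def)

lemma walk2: "is_walk V E [v, w] \<longleftrightarrow> v \<in> V \<and> w \<in> V \<and> E v w"
  by (auto simp add: is_walk_def less_Suc_eq)

lemma walk3: "v \<in> V \<Longrightarrow> m \<in> V \<Longrightarrow> w \<in> V \<Longrightarrow> E v m \<Longrightarrow> E m w \<Longrightarrow> is_walk V E [v, m, w]"
  by (auto simp add: is_walk_def less_Suc_eq)

lemma gdist_le:
  assumes "is_walk V E xs" "hd xs = v" "last xs = w"
  shows "gdist V E v w \<le> length xs - 1"
proof -
  have "xs \<noteq> []" using assms(1) by (simp add: is_walk_def)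
  then have "length xs = Suc (length xs - 1)" by simp
  then show ?thesis unfolding gdist_def using assms by (intro Least_le) blast
qed

lemma gdist_ex:
  assumes "is_walk V E xs" "hd xs = v" "last xs = w"
  shows "\<exists>ys. is_walk V E ys \<and> hd ys = v \<and> last ys = w \<and> length ys = Suc (gdist V E v w)"
proof -
  have "xs \<noteq> []" using assms(1) by (simp add: is_walk_def)
  then have "length xs = Suc (length xs - 1)" by simp
  then have "\<exists>k. \<exists>xs. is_walk V E xs \<and> hd xs = v \<and> last xs = w \<and> length xs = Suc k" using assms by blast
  then show ?thesis unfolding gdist_def by (rule LeastI_ex)
qed

lemma len1: "length xs = Suc 0 \<Longrightarrow> hd xs = last xs"
  by (cases xs) auto

lemma len2: "length xs = Suc (Suc 0) \<Longrightarrow> xs = [hd xs, last xs]"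
  by (cases xs; cases "tl xs") auto

lemma gdist_formula:
  assumes conn: "graph_connected (cmp_verts t n) cmp_adj"
    and v: "v \<in> cmp_verts t n" and u: "u \<in> cmp_verts t n"
  shows "gdist (cmp_verts t n) cmp_adj v u = (if u = v then 0 else if prt u = prt v then 2 else 1)"
proof -
  let ?V = "cmp_verts t n"
  show ?thesis
  proof (cases "u = v")
    case True
    have "gdist ?V cmp_adj v u \<le> length [v] - 1"
      by (rule gdist_le) (simp_all add: walk1 v True)
    then show ?thesis using True by simp
  next
    case ne: False
    obtain xs0 where xs0: "is_walk ?V cmp_adj xs0" "hd xs0 = v" "last xs0 = u"
      using conn v u unfolding graph_connected_def by blast
    obtain ys where ys: "is_walk ?V cmp_adj ys" "hd ys = v" "last ys = u"
      "length ys = Suc (gdist ?V cmp_adj v u)"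
      using gdist_ex[OF xs0] by blast
    have g0: "gdist ?V cmp_adj v u \<noteq> 0"
    proof
      assume "gdist ?V cmp_adj v u = 0"
      then have "hd ys = last ys" using ys(4) len1 by simp
      then show False using ys ne by simp
    qed
    show ?thesis
    proof (cases "prt u = prt v")
      case False
      then have "cmp_adj v u" by (simp add: adj_prt)
      then have "gdist ?V cmp_adj v u \<le> length [v,u] - 1"
        by (intro gdist_le) (simp_all add: walk2 v u)
      then show ?thesis using g0 ne False by simp
    next
      case same: True
      obtain xs where xs: "is_walk ?V cmp_adj xs" "hd xs = v" "last xs = u"
        using conn v u unfolding graph_connected_def by blast
      have "length xs \<noteq> 0" using xs by (auto simp: is_walk_def)
      moreover have "length xs \<noteq> 1" using xs ne len1 by fastforce
      ultimately have l2: "Suc 0 < length xs" by linarith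
      define m where "m = xs ! 1"
      have "xs ! 0 = v" using xs l2 by (cases xs) auto
      then have adj: "cmp_adj v m" using xs(1) l2 unfolding m_def is_walk_def by auto
      have mV: "m \<in> ?V" using xs(1) l2 unfolding m_def is_walk_def by auto
      have adj2: "cmp_adj m u" using adj same by (simp add: adj_prt)
      have "gdist ?V cmp_adj v u \<le> length [v,m,u] - 1"
        by (rule gdist_le[OF walk3[OF v mV u adj adj2]]) simp_all
      moreover have "gdist ?V cmp_adj v u \<noteq> 1"
      proof
        assume "gdist ?V cmp_adj v u = 1"
        then have "ys = [v, u]" using ys len2 by fastforce
        then have "cmp_adj v u" using ys(1) walk2 by metis
        then show False using same by (simp add: adj_prt)
      qed
      ultimately show ?thesis using g0 ne same by simp
    qed
  qed
qed

lemma finite_V: "finite (cmp_verts t n)"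
proof -
  have "cmp_verts t n \<subseteq> {..t} \<times> {..<(\<Sum>i\<le>t. n i)} \<times> {..t}"
  proof
    fix x assume "x \<in> cmp_verts t n"
    then obtain i j k where x: "x = (i,j,k)" "1 \<le> i" "i \<le> t" "j < n i" "k < i"
      unfolding cmp_verts_def by auto
    have "n i \<le> (\<Sum>i\<le>t. n i)" using x by (intro member_le_sum) auto
    then show "x \<in> {..t} \<times> {..<(\<Sum>i\<le>t. n i)} \<times> {..t}" using x by auto
  qed
  then show ?thesis by (rule finite_subset) auto
qed

lemma level_set:
  assumes conn: "graph_connected (cmp_verts t n) cmp_adj" and v: "v \<in> cmp_verts t n"
  shows "{u \<in> cmp_verts t n. gdist (cmp_verts t n) cmp_adj v u = j} =
    (if j = 0 then {v} else if j = 1 then {u \<in> cmp_verts t n. prt u \<noteq> prt v}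
     else if j = 2 then {u \<in> cmp_verts t n. prt u = prt v \<and> u \<noteq> v} else {})"
proof (rule set_eqI)
  fix x
  show "x \<in> {u \<in> cmp_verts t n. gdist (cmp_verts t n) cmp_adj v u = j} \<longleftrightarrow> x \<in>
    (if j = 0 then {v} else if j = 1 then {u \<in> cmp_verts t n. prt u \<noteq> prt v}
     else if j = 2 then {u \<in> cmp_verts t n. prt u = prt v \<and> u \<noteq> v} else {})"
  proof (cases "x \<in> cmp_verts t n")
    case True
    have g: "gdist (cmp_verts t n) cmp_adj v x = (if x = v then 0 else if prt x = prt v then 2 else 1)"
      by (rule gdist_formula[OF conn v True])
    show ?thesis unfolding mem_Collect_eq g using True v by (simp split: if_splits; blast)
  next
    case False
    then show ?thesis using v by auto
  qed
qed

lemma vstring_formula: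
  assumes conn: "graph_connected (cmp_verts t n) cmp_adj" and v: "v \<in> cmp_verts t n"
  shows "vstring (cmp_verts t n) cmp_adj f v =
    map (\<lambda>j. if j = 1 then sum f (cmp_verts t n) - sum f {u \<in> cmp_verts t n. prt u = prt v}
             else if j = 2 then sum f {u \<in> cmp_verts t n. prt u = prt v} - f v else 0)
      [1..<Suc (diameter (cmp_verts t n) cmp_adj)]"
  unfolding vstring_def
proof (rule map_cong[OF refl])
  let ?V = "cmp_verts t n"
  fix j assume "j \<in> set [1..<Suc (diameter ?V cmp_adj)]"
  then have j: "j \<noteq> 0" by auto
  have fin: "finite ?V" by (rule finite_V)
  have A: "sum f {u \<in> ?V. prt u \<noteq> prt v} = sum f ?V - sum f {u \<in> ?V. prt u = prt v}"
  proof -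
    have "?V = {u \<in> ?V. prt u = prt v} \<union> {u \<in> ?V. prt u \<noteq> prt v}" by auto
    then have "sum f ?V = sum f {u \<in> ?V. prt u = prt v} + sum f {u \<in> ?V. prt u \<noteq> prt v}"
      using fin by (metis (no_types, lifting) sum.union_disjoint finite_Un disjoint_iff mem_Collect_eq)
    then show ?thesis by simp
  qed
  have B: "sum f {u \<in> ?V. prt u = prt v \<and> u \<noteq> v} = sum f {u \<in> ?V. prt u = prt v} - f v"
  proof -
    have "{u \<in> ?V. prt u = prt v \<and> u \<noteq> v} = {u \<in> ?V. prt u = prt v} - {v}" by auto
    moreover have "sum f {u \<in> ?V. prt u = prt v} = f v + sum f ({u \<in> ?V. prt u = prt v} - {v})"
      using fin v by (intro sum.remove) auto
    ultimately show ?thesis by simp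
  qed
  show "(\<Sum>w\<in>{w \<in> ?V. gdist ?V cmp_adj v w = j}. f w) =
    (if j = 1 then sum f ?V - sum f {u \<in> ?V. prt u = prt v}
     else if j = 2 then sum f {u \<in> ?V. prt u = prt v} - f v else 0)"
    using level_set[OF conn v, of j] j A B by simp
qed

lemma diam_ge:
  assumes "v \<in> cmp_verts t n" "w \<in> cmp_verts t n"
  shows "gdist (cmp_verts t n) cmp_adj v w \<le> diameter (cmp_verts t n) cmp_adj"
  unfolding diameter_def
proof (rule Max_ge)
  show "finite {gdist (cmp_verts t n) cmp_adj v w |v w. v \<in> cmp_verts t n \<and> w \<in> cmp_verts t n}"
    using finite_V by (intro finite_image_set2) auto
qed (use assms in blast)

lemma vstring_eq:
  assumes conn: "graph_connected (cmp_verts t n) cmp_adj"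
    and v: "v \<in> cmp_verts t n" and w: "w \<in> cmp_verts t n" and fe: "f v = f w"
    and Fe: "sum f {u \<in> cmp_verts t n. prt u = prt v} = sum f {u \<in> cmp_verts t n. prt u = prt w}"
  shows "vstring (cmp_verts t n) cmp_adj f v = vstring (cmp_verts t n) cmp_adj f w"
  unfolding vstring_formula[OF conn v] vstring_formula[OF conn w] fe Fe ..

lemma part_eq:
  assumes "1 \<le> i" "i \<le> t" "j < n i"
  shows "{u \<in> cmp_verts t n. prt u = (i, j)} = (\<lambda>k. (i, j, k)) ` {..<i}"
  using assms unfolding cmp_verts_def prt_def by auto

lemma valid_bound:
  assumes conn: "graph_connected (cmp_verts t n) cmp_adj"
    and inj: "inj_on (vstring (cmp_verts t n) cmp_adj f) (cmp_verts t n)"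
    and i: "1 \<le> i" "i \<le> t"
  shows "n i \<le> card (f ` cmp_verts t n) choose i"
proof -
  let ?V = "cmp_verts t n"
  define P where "P j = {u \<in> ?V. prt u = (i, j)}" for j
  define A where "A j = f ` P j" for j
  have injP: "inj_on f (P j)" for j
  proof
    fix v w assume vw: "v \<in> P j" "w \<in> P j" "f v = f w"
    then have "vstring ?V cmp_adj f v = vstring ?V cmp_adj f w"
      by (intro vstring_eq[OF conn]) (auto simp: P_def)
    then show "v = w" using inj vw unfolding inj_on_def P_def by blast
  qed
  have cardP: "card (P j) = i" if "j < n i" for j
    unfolding P_def part_eq[where n=n, OF i that] by (subst card_image) (auto simp: inj_on_def)
  have sumA: "sum f (P j) = sum id (A j)" for j
    unfolding A_def by (simp add: sum.reindex[OF injP])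
  have injA: "inj_on A {..<n i}"
  proof
    fix j j' assume j: "j \<in> {..<n i}" and j': "j' \<in> {..<n i}" and eq: "A j = A j'"
    show "j = j'"
    proof (rule ccontr)
      assume ne: "j \<noteq> j'"
      define v where "v = (i, j, 0::nat)"
      have vP: "v \<in> P j" using i j unfolding v_def P_def cmp_verts_def prt_def by auto
      then have "f v \<in> A j'" using eq unfolding A_def by auto
      then obtain w where wP: "w \<in> P j'" and fw: "f w = f v" unfolding A_def by auto
      have "sum f (P j) = sum f (P j')" using sumA eq by simp
      then have "vstring ?V cmp_adj f v = vstring ?V cmp_adj f w"
        using vP wP fw by (intro vstring_eq[OF conn]) (auto simp: P_def)
      then have "v = w" using inj vP wP unfolding inj_on_def P_def by blast
      then show False using vP wP ne unfolding P_def by auto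
    qed
  qed
  have fin: "finite (f ` ?V)" using finite_V by simp
  have "A ` {..<n i} \<subseteq> {B. B \<subseteq> f ` ?V \<and> card B = i}"
  proof
    fix B assume "B \<in> A ` {..<n i}"
    then obtain j where j: "j < n i" "B = A j" by auto
    have "card B = i" using j cardP[OF j(1)] card_image[OF injP] unfolding A_def by simp
    moreover have "B \<subseteq> f ` ?V" using j unfolding A_def P_def by auto
    ultimately show "B \<in> {B. B \<subseteq> f ` ?V \<and> card B = i}" by simp
  qed
  then have "card {..<n i} \<le> card {B. B \<subseteq> f ` ?V \<and> card B = i}"
    using fin by (intro card_inj_on_le[OF injA]) auto
  then show ?thesis using n_subsets[OF fin] by simp
qed

lemma exists_valid:
  assumes conn: "graph_connected (cmp_verts t n) cmp_adj"
  shows "\<exists>f. inj_on (vstring (cmp_verts t n) cmp_adj f) (cmp_verts t n)"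
proof -
  let ?V = "cmp_verts t n"
  let ?d = "diameter ?V cmp_adj"
  define f :: "nat \<times> nat \<times> nat \<Rightarrow> real" where
    "f u = real (prod_encode (fst u, prod_encode (snd u)))" for u
  have finj: "f v = f w \<Longrightarrow> v = w" for v w
    unfolding f_def by (cases v; cases w) (auto dest: inj_onD[OF inj_prod_encode])
  define F where "F v = sum f {u \<in> ?V. prt u = prt v}" for v
  have vs: "vstring ?V cmp_adj f v = map (\<lambda>j. if j = 1 then sum f ?V - F v
             else if j = 2 then F v - f v else 0) [1..<Suc ?d]" if "v \<in> ?V" for v
    unfolding F_def by (rule vstring_formula[OF conn that])
  have "inj_on (vstring ?V cmp_adj f) ?V"
  proof
    fix v w assume v: "v \<in> ?V" and w: "w \<in> ?V" and eq: "vstring ?V cmp_adj f v = vstring ?V cmp_adj f w"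
    show "v = w"
    proof (cases "2 \<le> ?d")
      case True
      have "[1..<Suc ?d] ! 0 = 1" "[1..<Suc ?d] ! 1 = 2" using True by (simp_all add: nth_upt del: upt_Suc)
      moreover have "0 < length [1..<Suc ?d]" "1 < length [1..<Suc ?d]" using True by auto
      ultimately have "sum f ?V - F v = sum f ?V - F w" "F v - f v = F w - f w"
        using arg_cong[OF eq, of "\<lambda>l. l ! 0"] arg_cong[OF eq, of "\<lambda>l. l ! 1"]
        unfolding vs[OF v] vs[OF w] by (simp_all del: upt_Suc)
      then have "f v = f w" by simp
      then show ?thesis by (rule finj)
    next
      case False
      show ?thesis
      proof (rule ccontr)
        assume ne: "v \<noteq> w"
        have single: "{u \<in> ?V. prt u = prt x} = {x}" if x: "x \<in> ?V" for x
        proof -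
          have "u = x" if "u \<in> ?V" "prt u = prt x" for u
          proof (rule ccontr)
            assume "u \<noteq> x"
            then have "gdist ?V cmp_adj x u = 2" using gdist_formula[OF conn x \<open>u \<in> ?V\<close>] that by simp
            then show False using diam_ge[OF x \<open>u \<in> ?V\<close>] False by simp
          qed
          then show ?thesis using x by auto
        qed
        have Fv: "F v = f v" "F w = f w" unfolding F_def using single[OF v] single[OF w] by auto
        have "prt w \<noteq> prt v" using single[OF v] w ne by auto
        then have "gdist ?V cmp_adj v w = 1" using gdist_formula[OF conn v w] ne by auto
        then have d1: "?d = 1" using diam_ge[OF v w] False by simp
        then have "[1..<Suc ?d] = [1]" by simp
        then have "sum f ?V - F v = sum f ?V - F w" using eq unfolding vs[OF v] vs[OF w] by simp
        then have "f v = f w" using Fv by simp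
        then show False using finj ne by blast
      qed
    qed
  qed
  then show ?thesis by blast
qed

theorem mainTheorem14:
  fixes t :: nat and n :: "nat \<Rightarrow> nat"
  assumes "graph_connected (cmp_verts t n) cmp_adj"
  shows "\<forall>i\<in>{1..t}. n i \<le> IDI (cmp_verts t n) cmp_adj choose i"
proof
  fix i assume i: "i \<in> {1..t}"
  let ?V = "cmp_verts t n"
  obtain f0 where "inj_on (vstring ?V cmp_adj f0) ?V" using exists_valid[OF assms] by blast
  then have "\<exists>k. \<exists>f :: _ \<Rightarrow> real. card (f ` ?V) = k \<and> inj_on (vstring ?V cmp_adj f) ?V" by blast
  then have "\<exists>f :: _ \<Rightarrow> real. card (f ` ?V) = IDI ?V cmp_adj \<and> inj_on (vstring ?V cmp_adj f) ?V"
    unfolding IDI_def by (rule LeastI_ex)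
  then obtain f :: "_ \<Rightarrow> real" where f: "card (f ` ?V) = IDI ?V cmp_adj" "inj_on (vstring ?V cmp_adj f) ?V"
    by blast
  show "n i \<le> IDI ?V cmp_adj choose i"
    using valid_bound[OF assms f(2)] i f(1) by auto
qed

end
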